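(* Let $D$ be an integral domain of characteristic zero. Suppose that every $D$-algebra endomorphism $f$ of $D[x,y]$ with $\operatorname{Jac}(f(x),f(y))\in D^*$ is an automorphism of $D[x,y]$. Then for all $A,B,w\in D[x,y]$ with $\operatorname{Jac}(A,B)\in D^*$ and $\operatorname{Jac}(A,w)=0$, one has $w\in D[A]$.
   Context: $\operatorname{Jac}(u,v):=u_xv_y-u_yv_x$ for $u,v\in D[x,y]$. $D^*$ is the group of units of $D$. $D[A]$ is the $D$-subalgebra of $D[x,y]$ generated by $A$. *)

theory Defs
  imports "HOL-Computational_Algebra.Polynomial"
begin

text \<open>D[x,y] is represented as D[x][y], i.e. the type 'a poly poly:
 the outer variable is y, the inner variable is x.\<close>

definition const2 :: "'a::idom \<Rightarrow> 'a poly poly" where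
  "const2 c = [:[:c:]:]"

definition varX :: "'a::idom poly poly" where
  "varX = [:[:0, 1:]:]"

definition varY :: "'a::idom poly poly" where
  "varY = [:0, 1:]"

definition dx :: "'a::idom poly poly \<Rightarrow> 'a poly poly" where
  "dx u = map_poly pderiv u"

definition dy :: "'a::idom poly poly \<Rightarrow> 'a poly poly" where
  "dy u = pderiv u"

definition Jac :: "'a::idom poly poly \<Rightarrow> 'a poly poly \<Rightarrow> 'a poly poly" where
  "Jac u v = dx u * dy v - dy u * dx v"

definition is_Dunit :: "'a::idom poly poly \<Rightarrow> bool" where
  "is_Dunit p \<longleftrightarrow> (\<exists>c. (\<exists>d. c * d = 1) \<and> p = const2 c)"

definition D_alg_endo :: "('a::idom poly poly \<Rightarrow> 'a poly poly) \<Rightarrow> bool" where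
  "D_alg_endo f \<longleftrightarrow>
     (\<forall>p q. f (p + q) = f p + f q) \<and> (\<forall>p q. f (p * q) = f p * f q) \<and> f 1 = 1 \<and>
     (\<forall>c. f (const2 c) = const2 c)"

definition D_alg_auto :: "('a::idom poly poly \<Rightarrow> 'a poly poly) \<Rightarrow> bool" where
  "D_alg_auto f \<longleftrightarrow> D_alg_endo f \<and> bij f"

inductive_set Dalg_gen :: "'a::idom poly poly set \<Rightarrow> 'a poly poly set"
  for S :: "'a poly poly set" where
  const: "const2 c \<in> Dalg_gen S"
| gen: "a \<in> S \<Longrightarrow> a \<in> Dalg_gen S"
| add: "p \<in> Dalg_gen S \<Longrightarrow> q \<in> Dalg_gen S \<Longrightarrow> p + q \<in> Dalg_gen S"
| mult: "p \<in> Dalg_gen S \<Longrightarrow> q \<in> Dalg_gen S \<Longrightarrow> p * q \<in> Dalg_gen S"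

end

theory Submission
  imports Defs
begin

definition is_hom :: "('b::comm_ring_1 \<Rightarrow> 'c::comm_ring_1) \<Rightarrow> bool" where
  "is_hom h \<longleftrightarrow> h 0 = 0 \<and> h 1 = 1 \<and> (\<forall>x y. h (x+y) = h x + h y) \<and> (\<forall>x y. h (x*y) = h x * h y)"

lemma map_poly_hom_add:
  fixes h :: "'b::comm_semiring_0 \<Rightarrow> 'c::comm_semiring_0"
  assumes h0: "h 0 = 0" and ha: "\<And>x y. h (x+y) = h x + h y"
  shows "map_poly h (p+q) = map_poly h p + map_poly h q"
  by (intro poly_eqI) (simp add: coeff_map_poly h0 ha)

lemma hom_sum:
  fixes h :: "'b::comm_semiring_0 \<Rightarrow> 'c::comm_semiring_0"
  assumes h0: "h 0 = 0" and ha: "\<And>x y. h (x+y) = h x + h y"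
  shows "h (\<Sum>i\<in>S. g i) = (\<Sum>i\<in>S. h (g i))"
  using sum_comp_morphism[of h g S, OF h0 ha] by (simp add: o_def)

lemma map_poly_hom_mult:
  fixes h :: "'b::comm_semiring_0 \<Rightarrow> 'c::comm_semiring_0"
  assumes h0: "h 0 = 0" and ha: "\<And>x y. h (x+y) = h x + h y" and hm: "\<And>x y. h (x*y) = h x * h y"
  shows "map_poly h (p*q) = map_poly h p * map_poly h q"
proof (intro poly_eqI)
  fix n
  have "h (\<Sum>i\<le>n. coeff p i * coeff q (n-i)) = (\<Sum>i\<le>n. h (coeff p i * coeff q (n-i)))"
    by (rule hom_sum[OF h0 ha])
  then show "coeff (map_poly h (p*q)) n = coeff (map_poly h p * map_poly h q) n"
    by (simp add: coeff_map_poly h0 coeff_mult hm)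
qed

lemma hom_lift:
  assumes "is_hom h"
  shows "is_hom (\<lambda>p. poly (map_poly h p) a)"
  using assms unfolding is_hom_def
  by (auto simp: map_poly_hom_add map_poly_hom_mult)

lemma hom_const2: "is_hom (const2 :: 'a::idom \<Rightarrow> _)"
  unfolding is_hom_def const2_def by (auto simp: one_pCons)

definition ev :: "'a::idom poly poly \<Rightarrow> 'a poly \<Rightarrow> 'a poly poly" where
  "ev A p = poly (map_poly const2 p) A"

definition FF :: "'a::idom poly poly \<Rightarrow> 'a poly poly \<Rightarrow> 'a poly poly \<Rightarrow> 'a poly poly" where
  "FF A B u = poly (map_poly (ev A) u) B"

lemma hom_ev: "is_hom (ev A)"
  unfolding ev_def[abs_def] by (rule hom_lift[OF hom_const2])

lemma hom_FF: "is_hom (FF A B)"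
  unfolding FF_def[abs_def] by (rule hom_lift[OF hom_ev])

lemma ev_simps: "ev A 0 = 0" "ev A (pCons c p) = const2 c + A * ev A p"
proof -
  have "const2 0 = (0::'a poly poly)" by (simp add: const2_def)
  then show "ev A 0 = 0" "ev A (pCons c p) = const2 c + A * ev A p"
    by (auto simp: ev_def map_poly_pCons)
qed

lemma FF_simps: "FF A B 0 = 0" "FF A B (pCons p u) = ev A p + B * FF A B u"
proof -
  have "ev A 0 = 0" by (simp add: ev_simps)
  then show "FF A B 0 = 0" "FF A B (pCons p u) = ev A p + B * FF A B u"
    by (auto simp: FF_def map_poly_pCons)
qed

definition is_der :: "('a::idom poly poly \<Rightarrow> 'a poly poly) \<Rightarrow> bool" where
  "is_der d \<longleftrightarrow> (\<forall>u v. d (u+v) = d u + d v) \<and> (\<forall>u v. d (u*v) = d u * v + u * d v)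
     \<and> (\<forall>c. d (const2 c) = 0)"

lemma der_0: "is_der d \<Longrightarrow> d 0 = 0"
  unfolding is_der_def by (metis add_cancel_right_right add_0)

lemma chain_ev:
  assumes "is_der d"
  shows "d (ev A p) = ev A (pderiv p) * d A"
proof (induction p)
  case 0
  then show ?case using der_0[OF assms] by (simp add: ev_simps)
next
  case (pCons c p)
  have h: "is_hom (ev A)" by (rule hom_ev)
  have "d (ev A (pCons c p)) = d (const2 c) + (d A * ev A p + A * d (ev A p))"
    using assms unfolding is_der_def by (simp add: ev_simps const2_def)
  also have "\<dots> = (ev A p + A * ev A (pderiv p)) * d A"
    using assms pCons.IH unfolding is_der_def by (simp add: algebra_simps)
  also have "ev A p + A * ev A (pderiv p) = ev A (pderiv (pCons c p))"
    using h unfolding is_hom_def by (simp add: pderiv_pCons ev_simps const2_def)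
  finally show ?case .
qed

lemma dx_0: "dx 0 = 0" by (simp add: dx_def)
lemma dx_pCons: "dx (pCons p u) = pCons (pderiv p) (dx u)"
  by (simp add: dx_def map_poly_pCons)

lemma chain_FF:
  assumes "is_der d"
  shows "d (FF A B u) = FF A B (dx u) * d A + FF A B (dy u) * d B"
proof (induction u)
  case 0
  then show ?case using der_0[OF assms] by (simp add: FF_simps dx_0 dy_def)
next
  case (pCons p u)
  have h: "is_hom (FF A B)" by (rule hom_FF)
  have "d (FF A B (pCons p u)) = ev A (pderiv p) * d A + (d B * FF A B u + B * d (FF A B u))"
    using assms chain_ev[OF assms] unfolding is_der_def by (simp add: FF_simps)
  also have "\<dots> = (ev A (pderiv p) + B * FF A B (dx u)) * d A + (FF A B u + B * FF A B (dy u)) * d B"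
    using pCons.IH by (simp add: algebra_simps)
  also have "\<dots> = FF A B (dx (pCons p u)) * d A + FF A B (dy (pCons p u)) * d B"
    using h unfolding is_hom_def by (simp add: dx_pCons dy_def pderiv_pCons FF_simps ev_simps algebra_simps)
  finally show ?case .
qed

lemma der_dy: "is_der dy"
  unfolding is_der_def dy_def by (auto simp: pderiv_add pderiv_mult const2_def pderiv_pCons algebra_simps)

lemma dx_mult: "dx (u*v) = dx u * v + u * dx (v::'a::idom poly poly)"
  unfolding dx_def
proof (rule poly_eqI)
  fix n
  have "pderiv (\<Sum>i\<le>n. coeff u i * coeff v (n-i)) = (\<Sum>i\<le>n. pderiv (coeff u i * coeff v (n-i)))"
    by (rule hom_sum) (auto simp: pderiv_add)
  also have "\<dots> = (\<Sum>i\<le>n. pderiv (coeff u i) * coeff v (n-i)) + (\<Sum>i\<le>n. coeff u i * pderiv (coeff v (n-i)))"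
    by (simp add: pderiv_mult sum.distrib[symmetric] mult.commute add.commute)
  finally have X: "pderiv (\<Sum>i\<le>n. coeff u i * coeff v (n-i)) = (\<Sum>i\<le>n. pderiv (coeff u i) * coeff v (n-i)) + (\<Sum>i\<le>n. coeff u i * pderiv (coeff v (n-i)))" .
  show "coeff (map_poly pderiv (u * v)) n = coeff (map_poly pderiv u * v + u * map_poly pderiv v) n"
    using X by (simp add: coeff_map_poly coeff_mult)
qed

lemma der_dx: "is_der dx"
  unfolding is_der_def
proof (intro conjI allI)
  fix u v :: "'a poly poly"
  show "dx (u+v) = dx u + dx v" unfolding dx_def
    by (rule map_poly_hom_add) (auto simp: pderiv_add)
  show "dx (u*v) = dx u * v + u * dx v" by (rule dx_mult)
next
  fix c :: 'a
  show "dx (const2 c) = 0" by (simp add: dx_def const2_def map_poly_pCons)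
qed

lemma ev_in: "ev A p \<in> Dalg_gen {A}"
proof (induction p)
  case 0
  then show ?case using Dalg_gen.const[of 0 "{A}"] by (simp add: ev_simps const2_def)
next
  case (pCons c p)
  then show ?case by (simp add: ev_simps Dalg_gen.intros)
qed

theorem theorem3p5:
  fixes D_witness :: "'a::{idom, ring_char_0} itself"
  assumes JC: "\<And>f :: 'a poly poly \<Rightarrow> 'a poly poly.
                 D_alg_endo f \<Longrightarrow> is_Dunit (Jac (f varX) (f varY)) \<Longrightarrow> D_alg_auto f"
  shows "\<forall>A B w :: 'a poly poly. is_Dunit (Jac A B) \<and> Jac A w = 0 \<longrightarrow> w \<in> Dalg_gen {A}"
proof (intro allI impI, elim conjE)
  fix A B w :: "'a poly poly"
  assume U: "is_Dunit (Jac A B)" and J: "Jac A w = 0"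
  let ?f = "FF A B"
  have h: "is_hom ?f" by (rule hom_FF)
  have ev1: "ev A 1 = 1" using hom_ev[of A] by (simp add: is_hom_def)
  have fX: "?f varX = A"
    using ev1 by (simp add: varX_def FF_simps ev_simps const2_def one_pCons[symmetric])
  have fY: "?f varY = B"
    using ev1 by (simp add: varY_def FF_simps ev_simps const2_def)
  have fc: "?f (const2 c) = const2 c" for c
    by (simp add: const2_def FF_simps ev_simps)
  have endo: "D_alg_endo ?f"
    using h fc unfolding D_alg_endo_def is_hom_def by auto
  have "D_alg_auto ?f" using JC[OF endo] U fX fY by simp
  then have b: "bij ?f" by (simp add: D_alg_auto_def)
  then obtain w' where w: "w = ?f w'" by (metis bij_pointE)
  from U obtain c d where cd: "c * d = 1" and Jc: "Jac A B = const2 c"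
    unfolding is_Dunit_def by auto
  have c0: "const2 c \<noteq> 0" using cd by (auto simp: const2_def)
  have e1: "dx w = ?f (dx w') * dx A + ?f (dy w') * dx B"
    using chain_FF[OF der_dx] w by simp
  have e2: "dy w = ?f (dx w') * dy A + ?f (dy w') * dy B"
    using chain_FF[OF der_dy] w by simp
  have "Jac A w = ?f (dy w') * Jac A B"
    unfolding Jac_def e1 e2 by (simp add: algebra_simps)
  with J Jc c0 have "?f (dy w') = 0" by simp
  also have "0 = ?f 0" using h by (simp add: is_hom_def)
  finally have "dy w' = 0" using bij_is_inj[OF b] by (meson injD)
  then have "degree w' = 0" by (simp add: dy_def pderiv_eq_0_iff)
  then have "w' = [:coeff w' 0:]" by (metis degree_0_id)
  then have "w = ev A (coeff w' 0)" using w by (metis FF_simps add.right_neutral mult_zero_right)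
  then show "w \<in> Dalg_gen {A}" by (simp add: ev_in)
qed

end
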